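(* Let $(a_{ij})_{i,j=1}^s$, $(b_i)_{i=1}^s$ be the coefficients of a Runge–Kutta scheme with all $b_i\neq0$ which satisfies the classical order conditions up to order five and the simplifying assumptions $B(2)$, $C(2)$, $D(2)$. Then it also satisfies all the additional order conditions of order five: $$\sum_{k,l}\frac{a_{lk}c_kd_kd_l}{b_k}=\tfrac1{40},\ \sum_k\frac{c_k^2d_k^2}{b_k}=\tfrac1{30},\ \sum_l\frac{c_ld_l^3}{b_l^2}=\tfrac1{20},\ \sum_{k,l}\frac{a_{kl}d_k^2c_l}{b_k}=\tfrac1{60},\ \sum_m\frac{d_m^4}{b_m^3}=\tfrac15,$$ $$\sum_{i,j,k}b_ia_{ik}a_{ij}c_jc_k=\tfrac1{20},\ \sum_{j,k,l}a_{lk}a_{kj}c_jd_l=\tfrac1{120},\ \sum_{k,l}\frac{a_{lk}d_kc_ld_l}{b_k}=\tfrac7{120},\ \sum_{i,j,k}\frac{b_ib_j}{b_k}a_{jk}a_{ik}c_ic_j=\tfrac2{15},$$ $$\sum_{i,k}\frac{b_i}{b_k}a_{ik}c_ic_kd_k=\tfrac7{120},\ \sum_{i,l}\frac{b_i}{b_l^2}a_{il}c_id_l^2=\tfrac3{20},\ \sum_{k,l,m}\frac{a_{mk}a_{lk}d_ld_m}{b_k}=\tfrac1{20},\ \sum_{l,m}\frac{a_{ml}d_l^2d_m}{b_l^2}=\tfrac1{10},$$ $$\sum_{k,l,m}\frac{a_{ml}a_{lk}d_kd_m}{b_k}=\tfrac1{30},\ \sum_{i,k,l}\frac{b_i}{b_k}a_{lk}a_{ik}c_id_l=\tfrac3{40},\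 \sum_{i,k,l}\frac{b_i}{b_k}a_{ik}a_{il}d_kc_l=\tfrac3{40},$$ $$\sum_{i,l,m}\frac{b_i}{b_lb_m}a_{im}a_{il}d_ld_m=\tfrac2{15},\ \sum_{i,k}\frac{b_i}{b_k}a_{ik}c_i^2d_k=\tfrac3{20},\ \sum_{l,m}\frac{a_{lm}d_l^2d_m}{b_lb_m}=\tfrac1{15}.$$
   Context: All sums run from $1$ to $s$; $c_i=\sum_ja_{ij}$, $d_j=\sum_ib_ia_{ij}$. Simplifying assumptions: $B(p)$: $\sum_i b_ic_i^{q-1}=\frac1q$ for $q=1,\dots,p$; $C(\eta)$: $\sum_j a_{ij}c_j^{q-1}=\frac{c_i^q}{q}$ for all $i$ and $q=1,\dots,\eta$; $D(\zeta)$: $\sum_i b_ic_i^{q-1}a_{ij}=\frac{b_j}{q}(1-c_j^q)$ for all $j$ and $q=1,\dots,\zeta$. "Classical order conditions up to order five" are the standard Butcher rooted-tree conditions for an ODE $y'=f(y)$ up to order five. The additional conditions are those required (Bonnans–Laurent-Varin) for the discretization of an optimal control problem, with state scheme $(a_{ij},b_i)$ and adjoint scheme $\hat b_i=b_i$, $\hat a_{ij}=b_j-\frac{b_j}{b_i}a_{ji}$, to be of order five. *)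

theory Defs
  imports Complex_Main
begin

definition rk_c :: "nat \<Rightarrow> (nat \<Rightarrow> nat \<Rightarrow> real) \<Rightarrow> nat \<Rightarrow> real" where
  "rk_c s a i = (\<Sum>j\<in>{1..s}. a i j)"

definition rk_d :: "nat \<Rightarrow> (nat \<Rightarrow> nat \<Rightarrow> real) \<Rightarrow> (nat \<Rightarrow> real) \<Rightarrow> nat \<Rightarrow> real" where
  "rk_d s a b j = (\<Sum>i\<in>{1..s}. b i * a i j)"

definition simpl_B :: "nat \<Rightarrow> (nat \<Rightarrow> nat \<Rightarrow> real) \<Rightarrow> (nat \<Rightarrow> real) \<Rightarrow> nat \<Rightarrow> bool" where
  "simpl_B s a b p \<longleftrightarrow>
     (\<forall>q\<in>{1..p}. (\<Sum>i\<in>{1..s}. b i * rk_c s a i ^ (q - 1)) = 1 / real q)"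

definition simpl_C :: "nat \<Rightarrow> (nat \<Rightarrow> nat \<Rightarrow> real) \<Rightarrow> nat \<Rightarrow> bool" where
  "simpl_C s a eta \<longleftrightarrow>
     (\<forall>i\<in>{1..s}. \<forall>q\<in>{1..eta}.
        (\<Sum>j\<in>{1..s}. a i j * rk_c s a j ^ (q - 1)) = rk_c s a i ^ q / real q)"

definition simpl_D :: "nat \<Rightarrow> (nat \<Rightarrow> nat \<Rightarrow> real) \<Rightarrow> (nat \<Rightarrow> real) \<Rightarrow> nat \<Rightarrow> bool" where
  "simpl_D s a b zeta \<longleftrightarrow>
     (\<forall>j\<in>{1..s}. \<forall>q\<in>{1..zeta}.
        (\<Sum>i\<in>{1..s}. b i * rk_c s a i ^ (q - 1) * a i j) = b j / real q * (1 - rk_c s a j ^ q))"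

text \<open>The classical (Butcher rooted-tree) order conditions up to order five:
  the 17 conditions for the rooted trees with at most 5 vertices.\<close>

definition classical_order5 :: "nat \<Rightarrow> (nat \<Rightarrow> nat \<Rightarrow> real) \<Rightarrow> (nat \<Rightarrow> real) \<Rightarrow> bool" where
  "classical_order5 s a b \<longleftrightarrow>
   (let S = {1..s}; c = rk_c s a in
    \<comment> \<open>order 1\<close>
    (\<Sum>i\<in>S. b i) = 1 \<and>
    \<comment> \<open>order 2\<close>
    (\<Sum>i\<in>S. b i * c i) = 1/2 \<and>
    \<comment> \<open>order 3\<close>
    (\<Sum>i\<in>S. b i * c i ^ 2) = 1/3 \<and>
    (\<Sum>i\<in>S. \<Sum>j\<in>S. b i * a i j * c j) = 1/6 \<and>
    \<comment> \<open>order 4\<close>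
    (\<Sum>i\<in>S. b i * c i ^ 3) = 1/4 \<and>
    (\<Sum>i\<in>S. \<Sum>j\<in>S. b i * c i * a i j * c j) = 1/8 \<and>
    (\<Sum>i\<in>S. \<Sum>j\<in>S. b i * a i j * c j ^ 2) = 1/12 \<and>
    (\<Sum>i\<in>S. \<Sum>j\<in>S. \<Sum>k\<in>S. b i * a i j * a j k * c k) = 1/24 \<and>
    \<comment> \<open>order 5\<close>
    (\<Sum>i\<in>S. b i * c i ^ 4) = 1/5 \<and>
    (\<Sum>i\<in>S. \<Sum>j\<in>S. b i * c i ^ 2 * a i j * c j) = 1/10 \<and>
    (\<Sum>i\<in>S. \<Sum>j\<in>S. \<Sum>k\<in>S. b i * a i j * c j * a i k * c k) = 1/20 \<and>
    (\<Sum>i\<in>S. \<Sum>j\<in>S. b i * c i * a i j * c j ^ 2) = 1/15 \<and>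
    (\<Sum>i\<in>S. \<Sum>j\<in>S. \<Sum>k\<in>S. b i * c i * a i j * a j k * c k) = 1/30 \<and>
    (\<Sum>i\<in>S. \<Sum>j\<in>S. b i * a i j * c j ^ 3) = 1/20 \<and>
    (\<Sum>i\<in>S. \<Sum>j\<in>S. \<Sum>k\<in>S. b i * a i j * c j * a j k * c k) = 1/40 \<and>
    (\<Sum>i\<in>S. \<Sum>j\<in>S. \<Sum>k\<in>S. b i * a i j * a j k * c k ^ 2) = 1/60 \<and>
    (\<Sum>i\<in>S. \<Sum>j\<in>S. \<Sum>k\<in>S. \<Sum>l\<in>S. b i * a i j * a j k * a k l * c l) = 1/120)"

end

theory Submission
  imports Defs
begin

theorem mainTheorem4:
  fixes s :: nat and a :: "nat \<Rightarrow> nat \<Rightarrow> real" and b :: "nat \<Rightarrow> real"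
  assumes bnz: "\<forall>i\<in>{1..s}. b i \<noteq> 0"
    and classical: "classical_order5 s a b"
    and B2: "simpl_B s a b 2"
    and C2: "simpl_C s a 2"
    and D2: "simpl_D s a b 2"
  defines "S \<equiv> {1..s}" and "c \<equiv> rk_c s a" and "d \<equiv> rk_d s a b"
  shows
    "(\<Sum>k\<in>S. \<Sum>l\<in>S. a l k * c k * d k * d l / b k) = 1/40 \<and>
     (\<Sum>k\<in>S. c k ^ 2 * d k ^ 2 / b k) = 1/30 \<and>
     (\<Sum>l\<in>S. c l * d l ^ 3 / b l ^ 2) = 1/20 \<and>
     (\<Sum>k\<in>S. \<Sum>l\<in>S. a k l * d k ^ 2 * c l / b k) = 1/60 \<and>
     (\<Sum>m\<in>S. d m ^ 4 / b m ^ 3) = 1/5 \<and>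
     (\<Sum>i\<in>S. \<Sum>j\<in>S. \<Sum>k\<in>S. b i * a i k * a i j * c j * c k) = 1/20 \<and>
     (\<Sum>j\<in>S. \<Sum>k\<in>S. \<Sum>l\<in>S. a l k * a k j * c j * d l) = 1/120 \<and>
     (\<Sum>k\<in>S. \<Sum>l\<in>S. a l k * d k * c l * d l / b k) = 7/120 \<and>
     (\<Sum>i\<in>S. \<Sum>j\<in>S. \<Sum>k\<in>S. b i * b j / b k * a j k * a i k * c i * c j) = 2/15 \<and>
     (\<Sum>i\<in>S. \<Sum>k\<in>S. b i / b k * a i k * c i * c k * d k) = 7/120 \<and>
     (\<Sum>i\<in>S. \<Sum>l\<in>S. b i / b l ^ 2 * a i l * c i * d l ^ 2) = 3/20 \<and>
     (\<Sum>k\<in>S. \<Sum>l\<in>S. \<Sum>m\<in>S. a m k * a l k * d l * d m / b k) = 1/20 \<and>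
     (\<Sum>l\<in>S. \<Sum>m\<in>S. a m l * d l ^ 2 * d m / b l ^ 2) = 1/10 \<and>
     (\<Sum>k\<in>S. \<Sum>l\<in>S. \<Sum>m\<in>S. a m l * a l k * d k * d m / b k) = 1/30 \<and>
     (\<Sum>i\<in>S. \<Sum>k\<in>S. \<Sum>l\<in>S. b i / b k * a l k * a i k * c i * d l) = 3/40 \<and>
     (\<Sum>i\<in>S. \<Sum>k\<in>S. \<Sum>l\<in>S. b i / b k * a i k * a i l * d k * c l) = 3/40 \<and>
     (\<Sum>i\<in>S. \<Sum>l\<in>S. \<Sum>m\<in>S. b i / (b l * b m) * a i m * a i l * d l * d m) = 2/15 \<and>
     (\<Sum>i\<in>S. \<Sum>k\<in>S. b i / b k * a i k * c i ^ 2 * d k) = 3/20 \<and>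
     (\<Sum>l\<in>S. \<Sum>m\<in>S. a l m * d l ^ 2 * d m / (b l * b m)) = 1/15"
proof -
  have fin: "finite S" by (simp add: S_def)
  have bz: "\<And>k. k \<in> S \<Longrightarrow> b k \<noteq> 0" using bnz by (simp add: S_def)
  have cl: "(\<Sum>i\<in>S. b i) = 1" "(\<Sum>i\<in>S. b i * c i) = 1/2" "(\<Sum>i\<in>S. b i * c i ^ 2) = 1/3"
     "(\<Sum>i\<in>S. b i * c i ^ 3) = 1/4" "(\<Sum>i\<in>S. b i * c i ^ 4) = 1/5"
    using classical unfolding classical_order5_def Let_def c_def S_def by auto
  have poly: "\<And>x0 x1 x2 x3 x4. (\<Sum>k\<in>S. b k * (x0 + x1*c k + x2*c k^2 + x3*c k^3 + x4*c k^4))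
      = x0 + x1/2 + x2/3 + x3/4 + x4/5"
  proof -
    fix x0 x1 x2 x3 x4 :: real
    have "(\<Sum>k\<in>S. b k * (x0 + x1*c k + x2*c k^2 + x3*c k^3 + x4*c k^4))
       = (\<Sum>k\<in>S. x0 * b k + x1 * (b k * c k) + x2 * (b k * c k^2) + x3 * (b k * c k^3) + x4 * (b k * c k ^ 4))"
      by (rule sum.cong) (simp_all add: algebra_simps)
    also have "\<dots> = x0 * (\<Sum>i\<in>S. b i) + x1 * (\<Sum>i\<in>S. b i * c i) + x2 * (\<Sum>i\<in>S. b i * c i ^ 2)
       + x3 * (\<Sum>i\<in>S. b i * c i ^ 3) + x4 * (\<Sum>i\<in>S. b i * c i ^ 4)"
      by (simp add: sum.distrib sum_distrib_left)
    finally show "(\<Sum>k\<in>S. b k * (x0 + x1*c k + x2*c k^2 + x3*c k^3 + x4*c k^4))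
      = x0 + x1/2 + x2/3 + x3/4 + x4/5" by (simp add: cl)
  qed
  have D2': "\<And>j q. j \<in> S \<Longrightarrow> q \<in> {1..2} \<Longrightarrow> (\<Sum>i\<in>S. b i * c i ^ (q-1) * a i j) = b j / real q * (1 - c j ^ q)"
    using D2 unfolding simpl_D_def c_def S_def by blast
  have C2': "\<And>j q. j \<in> S \<Longrightarrow> q \<in> {1..2} \<Longrightarrow> (\<Sum>i\<in>S. a j i * c i ^ (q-1)) = c j ^ q / real q"
    using C2 unfolding simpl_C_def c_def S_def by blast
  have dS: "\<And>j. d j = (\<Sum>i\<in>S. b i * a i j)" by (simp add: d_def rk_d_def S_def)
  have cS: "\<And>j. c j = (\<Sum>i\<in>S. a j i)" by (simp add: c_def rk_c_def S_def)
  have dk: "\<And>k. k \<in> S \<Longrightarrow> d k = b k * (1 - c k)"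
    using D2'[of _ 1] by (simp add: dS)
  have Cs: "\<And>k. k \<in> S \<Longrightarrow> (\<Sum>j\<in>S. a k j * c j) = c k ^ 2 / 2"
    using C2'[of _ 2] by simp
  have H: "\<And>k. k \<in> S \<Longrightarrow> (\<Sum>i\<in>S. b i * c i * a i k) = b k * (1 - c k ^ 2) / 2"
    using D2'[of _ 2] by simp
  have E: "\<And>k. k \<in> S \<Longrightarrow> (\<Sum>l\<in>S. a l k * d l) = b k * (1 - c k) ^ 2 / 2"
  proof -
    fix k assume k: "k \<in> S"
    have "(\<Sum>l\<in>S. a l k * d l) = (\<Sum>l\<in>S. b l * a l k - b l * c l * a l k)"
      by (rule sum.cong) (simp_all add: dk algebra_simps)
    also have "\<dots> = d k - b k * (1 - c k ^ 2) / 2"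
      using H[OF k] by (simp add: sum_subtractf dS)
    finally show "(\<Sum>l\<in>S. a l k * d l) = b k * (1 - c k) ^ 2 / 2"
      using k by (simp add: dk power2_eq_square field_simps)
  qed
  have G: "\<And>l. l \<in> S \<Longrightarrow> (\<Sum>k\<in>S. a l k * d k / b k) = c l - c l ^ 2 / 2"
  proof -
    fix l assume l: "l \<in> S"
    have "(\<Sum>k\<in>S. a l k * d k / b k) = (\<Sum>k\<in>S. a l k - a l k * c k)"
      by (rule sum.cong) (simp_all add: dk bz field_simps)
    also have "\<dots> = c l - c l ^ 2 / 2"
      using Cs[OF l] by (simp add: sum_subtractf cS)
    finally show "(\<Sum>k\<in>S. a l k * d k / b k) = c l - c l ^ 2 / 2" .
  qed
  have r1: "(\<Sum>k\<in>S. \<Sum>l\<in>S. a l k * c k * d k * d l / b k) = 1/40"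
  proof -
    have "(\<Sum>k\<in>S. \<Sum>l\<in>S. a l k * c k * d k * d l / b k) = (\<Sum>k\<in>S. c k * d k / b k * (\<Sum>l\<in>S. a l k * d l))"
      by (simp add: sum_distrib_left sum_distrib_right divide_inverse inverse_mult_distrib mult_ac; ((rule sum.cong[OF refl], rule sum.swap))?)
    also have "\<dots> = (\<Sum>k\<in>S. b k * ((0) + (1/2) * c k + (-3/2) * c k ^ 2 + (3/2) * c k ^ 3 + (-1/2) * c k ^ 4))"
      by (rule sum.cong[OF refl]) ((simp only: E G H Cs)?; simp add: dk bz field_simps power2_eq_square power3_eq_cube; (algebra)?)
    also have "\<dots> = 1/40"
      by (subst poly) simp
    finally show ?thesis .
  qed
  have r2: "(\<Sum>k\<in>S. c k ^ 2 * d k ^ 2 / b k) = 1/30"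
  proof -
    have "(\<Sum>k\<in>S. c k ^ 2 * d k ^ 2 / b k) = (\<Sum>k\<in>S. b k * ((0) + (0) * c k + (1) * c k ^ 2 + (-2) * c k ^ 3 + (1) * c k ^ 4))"
      by (rule sum.cong[OF refl]) ((simp only: E G H Cs)?; simp add: dk bz field_simps power2_eq_square power3_eq_cube; (algebra)?)
    also have "\<dots> = 1/30"
      by (subst poly) simp
    finally show ?thesis .
  qed
  have r3: "(\<Sum>l\<in>S. c l * d l ^ 3 / b l ^ 2) = 1/20"
  proof -
    have "(\<Sum>l\<in>S. c l * d l ^ 3 / b l ^ 2) = (\<Sum>l\<in>S. b l * ((0) + (1) * c l + (-3) * c l ^ 2 + (3) * c l ^ 3 + (-1) * c l ^ 4))"
      by (rule sum.cong[OF refl]) ((simp only: E G H Cs)?; simp add: dk bz field_simps power2_eq_square power3_eq_cube; (algebra)?)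
    also have "\<dots> = 1/20"
      by (subst poly) simp
    finally show ?thesis .
  qed
  have r4: "(\<Sum>k\<in>S. \<Sum>l\<in>S. a k l * d k ^ 2 * c l / b k) = 1/60"
  proof -
    have "(\<Sum>k\<in>S. \<Sum>l\<in>S. a k l * d k ^ 2 * c l / b k) = (\<Sum>k\<in>S. d k ^ 2 / b k * (\<Sum>l\<in>S. a k l * c l))"
      by (simp add: sum_distrib_left sum_distrib_right divide_inverse inverse_mult_distrib mult_ac; ((rule sum.cong[OF refl], rule sum.swap))?)
    also have "\<dots> = (\<Sum>k\<in>S. b k * ((0) + (0) * c k + (1/2) * c k ^ 2 + (-1) * c k ^ 3 + (1/2) * c k ^ 4))"
      by (rule sum.cong[OF refl]) ((simp only: E G H Cs)?; simp add: dk bz field_simps power2_eq_square power3_eq_cube; (algebra)?)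
    also have "\<dots> = 1/60"
      by (subst poly) simp
    finally show ?thesis .
  qed
  have r5: "(\<Sum>m\<in>S. d m ^ 4 / b m ^ 3) = 1/5"
  proof -
    have "(\<Sum>m\<in>S. d m ^ 4 / b m ^ 3) = (\<Sum>m\<in>S. b m * ((1) + (-4) * c m + (6) * c m ^ 2 + (-4) * c m ^ 3 + (1) * c m ^ 4))"
      by (rule sum.cong[OF refl]) ((simp only: E G H Cs)?; simp add: dk bz field_simps power2_eq_square power3_eq_cube; (algebra)?)
    also have "\<dots> = 1/5"
      by (subst poly) simp
    finally show ?thesis .
  qed
  have r6: "(\<Sum>i\<in>S. \<Sum>j\<in>S. \<Sum>k\<in>S. b i * a i k * a i j * c j * c k) = 1/20"
  proof -
    have "(\<Sum>i\<in>S. \<Sum>j\<in>S. \<Sum>k\<in>S. b i * a i k * a i j * c j * c k) = (\<Sum>i\<in>S. b i * (\<Sum>j\<in>S. a i j * c j) * (\<Sum>k\<in>S. a i k * c k))"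
      by (simp add: sum_distrib_left sum_distrib_right divide_inverse inverse_mult_distrib mult_ac; ((rule sum.cong[OF refl], rule sum.swap))?)
    also have "\<dots> = (\<Sum>i\<in>S. b i * ((0) + (0) * c i + (0) * c i ^ 2 + (0) * c i ^ 3 + (1/4) * c i ^ 4))"
      by (rule sum.cong[OF refl]) ((simp only: E G H Cs)?; simp add: dk bz field_simps power2_eq_square power3_eq_cube; (algebra)?)
    also have "\<dots> = 1/20"
      by (subst poly) simp
    finally show ?thesis .
  qed
  have r7: "(\<Sum>j\<in>S. \<Sum>k\<in>S. \<Sum>l\<in>S. a l k * a k j * c j * d l) = 1/120"
  proof -
    have "(\<Sum>j\<in>S. \<Sum>k\<in>S. \<Sum>l\<in>S. a l k * a k j * c j * d l) = (\<Sum>k\<in>S. \<Sum>j\<in>S. \<Sum>l\<in>S. a l k * a k j * c j * d l)"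
      by (rule sum.swap)
    also have "\<dots> = (\<Sum>k\<in>S. (\<Sum>j\<in>S. a k j * c j) * (\<Sum>l\<in>S. a l k * d l))"
      by (simp add: sum_distrib_left sum_distrib_right divide_inverse inverse_mult_distrib mult_ac; ((rule sum.cong[OF refl], rule sum.swap))?)
    also have "\<dots> = (\<Sum>k\<in>S. b k * ((0) + (0) * c k + (1/4) * c k ^ 2 + (-1/2) * c k ^ 3 + (1/4) * c k ^ 4))"
      by (rule sum.cong[OF refl]) ((simp only: E G H Cs)?; simp add: dk bz field_simps power2_eq_square power3_eq_cube; (algebra)?)
    also have "\<dots> = 1/120"
      by (subst poly) simp
    finally show ?thesis .
  qed
  have r8: "(\<Sum>k\<in>S. \<Sum>l\<in>S. a l k * d k * c l * d l / b k) = 7/120"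
  proof -
    have "(\<Sum>k\<in>S. \<Sum>l\<in>S. a l k * d k * c l * d l / b k) = (\<Sum>l\<in>S. \<Sum>k\<in>S. a l k * d k * c l * d l / b k)"
      by (rule sum.swap)
    also have "\<dots> = (\<Sum>l\<in>S. c l * d l * (\<Sum>k\<in>S. a l k * d k / b k))"
      by (simp add: sum_distrib_left sum_distrib_right divide_inverse inverse_mult_distrib mult_ac; ((rule sum.cong[OF refl], rule sum.swap))?)
    also have "\<dots> = (\<Sum>l\<in>S. b l * ((0) + (0) * c l + (1) * c l ^ 2 + (-3/2) * c l ^ 3 + (1/2) * c l ^ 4))"
      by (rule sum.cong[OF refl]) ((simp only: E G H Cs)?; simp add: dk bz field_simps power2_eq_square power3_eq_cube; (algebra)?)
    also have "\<dots> = 7/120"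
      by (subst poly) simp
    finally show ?thesis .
  qed
  have r9: "(\<Sum>i\<in>S. \<Sum>j\<in>S. \<Sum>k\<in>S. b i * b j / b k * a j k * a i k * c i * c j) = 2/15"
  proof -
    have "(\<Sum>i\<in>S. \<Sum>j\<in>S. \<Sum>k\<in>S. b i * b j / b k * a j k * a i k * c i * c j) = (\<Sum>i\<in>S. \<Sum>k\<in>S. \<Sum>j\<in>S. b i * b j / b k * a j k * a i k * c i * c j)"
      by (rule sum.cong[OF refl]) (rule sum.swap)
    also have "\<dots> = (\<Sum>k\<in>S. \<Sum>i\<in>S. \<Sum>j\<in>S. b i * b j / b k * a j k * a i k * c i * c j)"
      by (rule sum.swap)
    also have "\<dots> = (\<Sum>k\<in>S. (1 / b k) * (\<Sum>i\<in>S. b i * c i * a i k) * (\<Sum>j\<in>S. b j * c j * a j k))"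
      by (simp add: sum_distrib_left sum_distrib_right divide_inverse inverse_mult_distrib mult_ac; ((rule sum.cong[OF refl], rule sum.swap))?)
    also have "\<dots> = (\<Sum>k\<in>S. b k * ((1/4) + (0) * c k + (-1/2) * c k ^ 2 + (0) * c k ^ 3 + (1/4) * c k ^ 4))"
      by (rule sum.cong[OF refl]) ((simp only: E G H Cs)?; simp add: dk bz field_simps power2_eq_square power3_eq_cube; (algebra)?)
    also have "\<dots> = 2/15"
      by (subst poly) simp
    finally show ?thesis .
  qed
  have r10: "(\<Sum>i\<in>S. \<Sum>k\<in>S. b i / b k * a i k * c i * c k * d k) = 7/120"
  proof -
    have "(\<Sum>i\<in>S. \<Sum>k\<in>S. b i / b k * a i k * c i * c k * d k) = (\<Sum>k\<in>S. \<Sum>i\<in>S. b i / b k * a i k * c i * c k * d k)"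
      by (rule sum.swap)
    also have "\<dots> = (\<Sum>k\<in>S. c k * d k / b k * (\<Sum>i\<in>S. b i * c i * a i k))"
      by (simp add: sum_distrib_left sum_distrib_right divide_inverse inverse_mult_distrib mult_ac; ((rule sum.cong[OF refl], rule sum.swap))?)
    also have "\<dots> = (\<Sum>k\<in>S. b k * ((0) + (1/2) * c k + (-1/2) * c k ^ 2 + (-1/2) * c k ^ 3 + (1/2) * c k ^ 4))"
      by (rule sum.cong[OF refl]) ((simp only: E G H Cs)?; simp add: dk bz field_simps power2_eq_square power3_eq_cube; (algebra)?)
    also have "\<dots> = 7/120"
      by (subst poly) simp
    finally show ?thesis .
  qed
  have r11: "(\<Sum>i\<in>S. \<Sum>l\<in>S. b i / b l ^ 2 * a i l * c i * d l ^ 2) = 3/20"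
  proof -
    have "(\<Sum>i\<in>S. \<Sum>l\<in>S. b i / b l ^ 2 * a i l * c i * d l ^ 2) = (\<Sum>l\<in>S. \<Sum>i\<in>S. b i / b l ^ 2 * a i l * c i * d l ^ 2)"
      by (rule sum.swap)
    also have "\<dots> = (\<Sum>l\<in>S. d l ^ 2 / b l ^ 2 * (\<Sum>i\<in>S. b i * c i * a i l))"
      by (simp add: sum_distrib_left sum_distrib_right divide_inverse inverse_mult_distrib mult_ac; ((rule sum.cong[OF refl], rule sum.swap))?)
    also have "\<dots> = (\<Sum>l\<in>S. b l * ((1/2) + (-1) * c l + (0) * c l ^ 2 + (1) * c l ^ 3 + (-1/2) * c l ^ 4))"
      by (rule sum.cong[OF refl]) ((simp only: E G H Cs)?; simp add: dk bz field_simps power2_eq_square power3_eq_cube; (algebra)?)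
    also have "\<dots> = 3/20"
      by (subst poly) simp
    finally show ?thesis .
  qed
  have r12: "(\<Sum>k\<in>S. \<Sum>l\<in>S. \<Sum>m\<in>S. a m k * a l k * d l * d m / b k) = 1/20"
  proof -
    have "(\<Sum>k\<in>S. \<Sum>l\<in>S. \<Sum>m\<in>S. a m k * a l k * d l * d m / b k) = (\<Sum>k\<in>S. 1 / b k * (\<Sum>l\<in>S. a l k * d l) * (\<Sum>m\<in>S. a m k * d m))"
      by (simp add: sum_distrib_left sum_distrib_right divide_inverse inverse_mult_distrib mult_ac; ((rule sum.cong[OF refl], rule sum.swap))?)
    also have "\<dots> = (\<Sum>k\<in>S. b k * ((1/4) + (-1) * c k + (3/2) * c k ^ 2 + (-1) * c k ^ 3 + (1/4) * c k ^ 4))"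
      by (rule sum.cong[OF refl]) ((simp only: E G H Cs)?; simp add: dk bz field_simps power2_eq_square power3_eq_cube; (algebra)?)
    also have "\<dots> = 1/20"
      by (subst poly) simp
    finally show ?thesis .
  qed
  have r13: "(\<Sum>l\<in>S. \<Sum>m\<in>S. a m l * d l ^ 2 * d m / b l ^ 2) = 1/10"
  proof -
    have "(\<Sum>l\<in>S. \<Sum>m\<in>S. a m l * d l ^ 2 * d m / b l ^ 2) = (\<Sum>l\<in>S. d l ^ 2 / b l ^ 2 * (\<Sum>m\<in>S. a m l * d m))"
      by (simp add: sum_distrib_left sum_distrib_right divide_inverse inverse_mult_distrib mult_ac; ((rule sum.cong[OF refl], rule sum.swap))?)
    also have "\<dots> = (\<Sum>l\<in>S. b l * ((1/2) + (-2) * c l + (3) * c l ^ 2 + (-2) * c l ^ 3 + (1/2) * c l ^ 4))"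
      by (rule sum.cong[OF refl]) ((simp only: E G H Cs)?; simp add: dk bz field_simps power2_eq_square power3_eq_cube; (algebra)?)
    also have "\<dots> = 1/10"
      by (subst poly) simp
    finally show ?thesis .
  qed
  have r14: "(\<Sum>k\<in>S. \<Sum>l\<in>S. \<Sum>m\<in>S. a m l * a l k * d k * d m / b k) = 1/30"
  proof -
    have "(\<Sum>k\<in>S. \<Sum>l\<in>S. \<Sum>m\<in>S. a m l * a l k * d k * d m / b k) = (\<Sum>l\<in>S. \<Sum>k\<in>S. \<Sum>m\<in>S. a m l * a l k * d k * d m / b k)"
      by (rule sum.swap)
    also have "\<dots> = (\<Sum>l\<in>S. (\<Sum>k\<in>S. a l k * d k / b k) * (\<Sum>m\<in>S. a m l * d m))"
      by (simp add: sum_distrib_left sum_distrib_right divide_inverse inverse_mult_distrib mult_ac; ((rule sum.cong[OF refl], rule sum.swap))?)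
    also have "\<dots> = (\<Sum>l\<in>S. b l * ((0) + (1/2) * c l + (-5/4) * c l ^ 2 + (1) * c l ^ 3 + (-1/4) * c l ^ 4))"
      by (rule sum.cong[OF refl]) ((simp only: E G H Cs)?; simp add: dk bz field_simps power2_eq_square power3_eq_cube; (algebra)?)
    also have "\<dots> = 1/30"
      by (subst poly) simp
    finally show ?thesis .
  qed
  have r15: "(\<Sum>i\<in>S. \<Sum>k\<in>S. \<Sum>l\<in>S. b i / b k * a l k * a i k * c i * d l) = 3/40"
  proof -
    have "(\<Sum>i\<in>S. \<Sum>k\<in>S. \<Sum>l\<in>S. b i / b k * a l k * a i k * c i * d l) = (\<Sum>k\<in>S. \<Sum>i\<in>S. \<Sum>l\<in>S. b i / b k * a l k * a i k * c i * d l)"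
      by (rule sum.swap)
    also have "\<dots> = (\<Sum>k\<in>S. 1 / b k * (\<Sum>i\<in>S. b i * c i * a i k) * (\<Sum>l\<in>S. a l k * d l))"
      by (simp add: sum_distrib_left sum_distrib_right divide_inverse inverse_mult_distrib mult_ac; ((rule sum.cong[OF refl], rule sum.swap))?)
    also have "\<dots> = (\<Sum>k\<in>S. b k * ((1/4) + (-1/2) * c k + (0) * c k ^ 2 + (1/2) * c k ^ 3 + (-1/4) * c k ^ 4))"
      by (rule sum.cong[OF refl]) ((simp only: E G H Cs)?; simp add: dk bz field_simps power2_eq_square power3_eq_cube; (algebra)?)
    also have "\<dots> = 3/40"
      by (subst poly) simp
    finally show ?thesis .
  qed
  have r16: "(\<Sum>i\<in>S. \<Sum>k\<in>S. \<Sum>l\<in>S. b i / b k * a i k * a i l * d k * c l) = 3/40"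
  proof -
    have "(\<Sum>i\<in>S. \<Sum>k\<in>S. \<Sum>l\<in>S. b i / b k * a i k * a i l * d k * c l) = (\<Sum>i\<in>S. b i * (\<Sum>k\<in>S. a i k * d k / b k) * (\<Sum>l\<in>S. a i l * c l))"
      by (simp add: sum_distrib_left sum_distrib_right divide_inverse inverse_mult_distrib mult_ac; ((rule sum.cong[OF refl], rule sum.swap))?)
    also have "\<dots> = (\<Sum>i\<in>S. b i * ((0) + (0) * c i + (0) * c i ^ 2 + (1/2) * c i ^ 3 + (-1/4) * c i ^ 4))"
      by (rule sum.cong[OF refl]) ((simp only: E G H Cs)?; simp add: dk bz field_simps power2_eq_square power3_eq_cube; (algebra)?)
    also have "\<dots> = 3/40"
      by (subst poly) simp
    finally show ?thesis .
  qed
  have r17: "(\<Sum>i\<in>S. \<Sum>l\<in>S. \<Sum>m\<in>S. b i / (b l * b m) * a i m * a i l * d l * d m) = 2/15"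
  proof -
    have "(\<Sum>i\<in>S. \<Sum>l\<in>S. \<Sum>m\<in>S. b i / (b l * b m) * a i m * a i l * d l * d m) = (\<Sum>i\<in>S. b i * (\<Sum>l\<in>S. a i l * d l / b l) * (\<Sum>m\<in>S. a i m * d m / b m))"
      by (simp add: sum_distrib_left sum_distrib_right divide_inverse inverse_mult_distrib mult_ac; ((rule sum.cong[OF refl], rule sum.swap))?)
    also have "\<dots> = (\<Sum>i\<in>S. b i * ((0) + (0) * c i + (1) * c i ^ 2 + (-1) * c i ^ 3 + (1/4) * c i ^ 4))"
      by (rule sum.cong[OF refl]) ((simp only: E G H Cs)?; simp add: dk bz field_simps power2_eq_square power3_eq_cube; (algebra)?)
    also have "\<dots> = 2/15"
      by (subst poly) simp
    finally show ?thesis .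
  qed
  have r18: "(\<Sum>i\<in>S. \<Sum>k\<in>S. b i / b k * a i k * c i ^ 2 * d k) = 3/20"
  proof -
    have "(\<Sum>i\<in>S. \<Sum>k\<in>S. b i / b k * a i k * c i ^ 2 * d k) = (\<Sum>i\<in>S. b i * c i ^ 2 * (\<Sum>k\<in>S. a i k * d k / b k))"
      by (simp add: sum_distrib_left sum_distrib_right divide_inverse inverse_mult_distrib mult_ac; ((rule sum.cong[OF refl], rule sum.swap))?)
    also have "\<dots> = (\<Sum>i\<in>S. b i * ((0) + (0) * c i + (0) * c i ^ 2 + (1) * c i ^ 3 + (-1/2) * c i ^ 4))"
      by (rule sum.cong[OF refl]) ((simp only: E G H Cs)?; simp add: dk bz field_simps power2_eq_square power3_eq_cube; (algebra)?)
    also have "\<dots> = 3/20"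
      by (subst poly) simp
    finally show ?thesis .
  qed
  have r19: "(\<Sum>l\<in>S. \<Sum>m\<in>S. a l m * d l ^ 2 * d m / (b l * b m)) = 1/15"
  proof -
    have "(\<Sum>l\<in>S. \<Sum>m\<in>S. a l m * d l ^ 2 * d m / (b l * b m)) = (\<Sum>l\<in>S. d l ^ 2 / b l * (\<Sum>m\<in>S. a l m * d m / b m))"
      by (simp add: sum_distrib_left sum_distrib_right divide_inverse inverse_mult_distrib mult_ac; ((rule sum.cong[OF refl], rule sum.swap))?)
    also have "\<dots> = (\<Sum>l\<in>S. b l * ((0) + (1) * c l + (-5/2) * c l ^ 2 + (2) * c l ^ 3 + (-1/2) * c l ^ 4))"
      by (rule sum.cong[OF refl]) ((simp only: E G H Cs)?; simp add: dk bz field_simps power2_eq_square power3_eq_cube; (algebra)?)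
    also have "\<dots> = 1/15"
      by (subst poly) simp
    finally show ?thesis .
  qed
  show ?thesis using r1 r2 r3 r4 r5 r6 r7 r8 r9 r10 r11 r12 r13 r14 r15 r16 r17 r18 r19 by blast
qed

end
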